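(* Let $A\in\mathbb{C}^{n\times n}$, and fix $A^-\in A\{1\}$ and $A^{GD}\in A\{GD\}$. Then $A^{GD}AA^{-}$ is the $(A^{GD}A,\,AA^{-})$-inverse of $A$.
   Context: For $A\in\mathbb{C}^{n\times n}$, $ind(A)$ is the smallest nonnegative integer $k$ with $\mathrm{rank}(A^k)=\mathrm{rank}(A^{k+1})$. $A\{1\}$ is the set of matrices $X$ with $AXA=A$. With $k=ind(A)$, $A\{GD\}$ is the set of G-Drazin inverses of $A$: matrices $X$ with $AXA=A$, $XA^{k+1}=A^k$, $A^{k+1}X=A^k$. For $A,B,C\in\mathbb{C}^{n\times n}$, a matrix $X\in\mathbb{C}^{n\times n}$ is the $(B,C)$-inverse of $A$ if $XAB=B$, $CAX=C$, $N(C)\subseteq N(X)$ and $R(X)\subseteq R(B)$ (such $X$, if it exists, is unique); $R(\cdot)$, $N(\cdot)$ denote range and null space. *)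

theory Defs
  imports "HOL-Analysis.Analysis"
begin

primrec mpow :: "'a::comm_ring_1^'n^'n \<Rightarrow> nat \<Rightarrow> 'a^'n^'n" where
  "mpow A 0 = mat 1"
| "mpow A (Suc k) = A ** mpow A k"

definition ind :: "complex^'n^'n \<Rightarrow> nat" where
  "ind A = (LEAST k. rank (mpow A k) = rank (mpow A (Suc k)))"

definition mrange :: "complex^'n^'n \<Rightarrow> (complex^'n) set" where
  "mrange A = range (\<lambda>x. A *v x)"

definition mnull :: "complex^'n^'n \<Rightarrow> (complex^'n) set" where
  "mnull A = {x. A *v x = 0}"

definition inner1 :: "complex^'n^'n \<Rightarrow> (complex^'n^'n) set" where
  "inner1 A = {X. A ** X ** A = A}"

definition GD_inverses :: "complex^'n^'n \<Rightarrow> (complex^'n^'n) set" where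
  "GD_inverses A = {X. A ** X ** A = A
      \<and> X ** mpow A (Suc (ind A)) = mpow A (ind A)
      \<and> mpow A (Suc (ind A)) ** X = mpow A (ind A)}"

definition is_BC_inverse :: "complex^'n^'n \<Rightarrow> complex^'n^'n \<Rightarrow> complex^'n^'n \<Rightarrow> complex^'n^'n \<Rightarrow> bool" where
  "is_BC_inverse A B C X \<longleftrightarrow> X ** A ** B = B \<and> C ** A ** X = C
      \<and> mnull C \<subseteq> mnull X \<and> mrange X \<subseteq> mrange B"

end

theory Submission
  imports Defs
begin

theorem theorem2p10:
  fixes A Am Agd :: "complex^'n^'n"
  assumes "Am \<in> inner1 A" and "Agd \<in> GD_inverses A"
  shows "is_BC_inverse A (Agd ** A) (A ** Am) (Agd ** A ** Am)"
proof -
  have g: "A ** Agd ** A = A" using assms(2) by (simp add: GD_inverses_def)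
  have m: "A ** Am ** A = A" using assms(1) by (simp add: inner1_def)
  have 1: "Agd ** A ** Am ** A ** (Agd ** A) = Agd ** A"
    by (metis m g matrix_mul_assoc)
  have 2: "A ** Am ** A ** (Agd ** A ** Am) = A ** Am"
    by (metis m g matrix_mul_assoc)
  have 3: "mnull (A ** Am) \<subseteq> mnull (Agd ** A ** Am)"
    unfolding mnull_def
    by (auto simp: matrix_mul_assoc matrix_vector_mul_assoc[symmetric])
  have 4: "mrange (Agd ** A ** Am) \<subseteq> mrange (Agd ** A)"
    unfolding mrange_def
    by (auto simp: matrix_vector_mul_assoc[symmetric])
  show ?thesis unfolding is_BC_inverse_def using 1 2 3 4 by simp
qed

end
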